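(* Let $G,H$ be connected graphs, $u_0\in V(G)$, $v_0\in V(H)$. If $\iota(G),\iota(H)<\infty$ then $\iota(G\circ_{u_0,v_0}H)=\iota(G)+\iota(H)$. If $\iota(G)=\infty$ or $\iota(H)=\infty$, then $\iota(G\circ_{u_0,v_0}H)=\infty$.
   Context: For a connected graph $G$ on vertices $v_1,\dots,v_n$, its distance matrix is $D=(d(v_i,v_j))_{i,j=1}^n$, where $d$ is the shortest-path distance; $\vec 1$ denotes the all-ones vector. $G$ is distance exceptional if $D\vec x=\vec 1$ has no solution. A curvature potential is a vector $\vec x$ with $D\vec x=\vec 1$. Curvature index $\iota(G)\in\mathbb{R}\cup\{\infty\}$: if $G$ is distance exceptional or has a curvature potential $\vec x$ with $\vec 1^\top\vec x\neq0$, then $\iota(G)$ is the unique real number with $\{D\vec x:\vec 1^\top\vec x=1\}\cap\mathbb{R}\vec 1=\{\iota(G)\vec 1\}$ (this intersection is a single point); otherwise (curvature potentials exist and all have $\vec 1^\top\vec x=0$) $\iota(G)=\infty$. The vertex coalescence $G\circ_{u_0,v_0}H$ is the graph obtained from the disjoint union of $G$ and $H$ by identifying $u_0$ with $v_0$. *)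

theory Defs
  imports Complex_Main "HOL-Library.Extended_Real"
begin

definition graph :: "'a set \<Rightarrow> ('a \<Rightarrow> 'a \<Rightarrow> bool) \<Rightarrow> bool" where
  "graph V E \<longleftrightarrow> finite V \<and> (\<forall>x y. E x y \<longrightarrow> E y x) \<and> (\<forall>x. \<not> E x x)
      \<and> (\<forall>x y. E x y \<longrightarrow> x \<in> V \<and> y \<in> V)"

definition walk :: "'a set \<Rightarrow> ('a \<Rightarrow> 'a \<Rightarrow> bool) \<Rightarrow> 'a list \<Rightarrow> bool" where
  "walk V E xs \<longleftrightarrow> xs \<noteq> [] \<and> set xs \<subseteq> V \<and>
      (\<forall>i. Suc i < length xs \<longrightarrow> E (xs ! i) (xs ! Suc i))"

definition connected_graph :: "'a set \<Rightarrow> ('a \<Rightarrow> 'a \<Rightarrow> bool) \<Rightarrow> bool" where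
  "connected_graph V E \<longleftrightarrow> graph V E \<and> V \<noteq> {} \<and>
      (\<forall>u\<in>V. \<forall>v\<in>V. \<exists>xs. walk V E xs \<and> hd xs = u \<and> last xs = v)"

definition gdist :: "'a set \<Rightarrow> ('a \<Rightarrow> 'a \<Rightarrow> bool) \<Rightarrow> 'a \<Rightarrow> 'a \<Rightarrow> nat" where
  "gdist V E u v = (LEAST n. \<exists>xs. walk V E xs \<and> hd xs = u \<and> last xs = v \<and> length xs = Suc n)"

definition distmul :: "'a set \<Rightarrow> ('a \<Rightarrow> 'a \<Rightarrow> bool) \<Rightarrow> ('a \<Rightarrow> real) \<Rightarrow> 'a \<Rightarrow> real" where
  "distmul V E x i = (\<Sum>j\<in>V. real (gdist V E i j) * x j)"

definition curvature_potential :: "'a set \<Rightarrow> ('a \<Rightarrow> 'a \<Rightarrow> bool) \<Rightarrow> ('a \<Rightarrow> real) \<Rightarrow> bool" where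
  "curvature_potential V E x \<longleftrightarrow> (\<forall>i\<in>V. distmul V E x i = 1)"

definition distance_exceptional :: "'a set \<Rightarrow> ('a \<Rightarrow> 'a \<Rightarrow> bool) \<Rightarrow> bool" where
  "distance_exceptional V E \<longleftrightarrow> \<not> (\<exists>x. curvature_potential V E x)"

text \<open>Curvature index, in ereal; the value \<infinity> is PInfty.  In the finite case it is the
  unique real c such that c\<cdot>1 = D x for some x with (sum of x over V) = 1.\<close>
definition curv_index :: "'a set \<Rightarrow> ('a \<Rightarrow> 'a \<Rightarrow> bool) \<Rightarrow> ereal" where
  "curv_index V E =
    (if distance_exceptional V E \<or> (\<exists>x. curvature_potential V E x \<and> sum x V \<noteq> 0)
     then ereal (THE c. \<exists>x. sum x V = 1 \<and> (\<forall>i\<in>V. distmul V E x i = c))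
     else PInfty)"

text \<open>Vertex coalescence: vertices Inl ` VG plus Inr ` (VH - {v0}); v0 is identified with u0.\<close>
definition coal_V :: "'a set \<Rightarrow> 'b set \<Rightarrow> 'b \<Rightarrow> ('a + 'b) set" where
  "coal_V VG VH v0 = Inl ` VG \<union> Inr ` (VH - {v0})"

definition coal_E :: "('a \<Rightarrow> 'a \<Rightarrow> bool) \<Rightarrow> ('b \<Rightarrow> 'b \<Rightarrow> bool) \<Rightarrow> 'a \<Rightarrow> 'b
    \<Rightarrow> ('a + 'b) \<Rightarrow> ('a + 'b) \<Rightarrow> bool" where
  "coal_E EG EH u0 v0 p q =
    (case (p, q) of
       (Inl x, Inl y) \<Rightarrow> EG x y
     | (Inr x, Inr y) \<Rightarrow> x \<noteq> v0 \<and> y \<noteq> v0 \<and> EH x y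
     | (Inl x, Inr y) \<Rightarrow> x = u0 \<and> y \<noteq> v0 \<and> EH v0 y
     | (Inr x, Inl y) \<Rightarrow> y = u0 \<and> x \<noteq> v0 \<and> EH x v0)"

end

theory Submission
  imports Defs
begin


inductive reach :: "('a \<Rightarrow> 'a \<Rightarrow> bool) \<Rightarrow> nat \<Rightarrow> 'a \<Rightarrow> 'a \<Rightarrow> bool" for E where
  r0: "reach E 0 u u"
| rS: "E u w \<Longrightarrow> reach E n w v \<Longrightarrow> reach E (Suc n) u v"

lemma reach_trans: "reach E m u w \<Longrightarrow> reach E k w v \<Longrightarrow> reach E (m+k) u v"
  by (induction rule: reach.induct) (auto intro: reach.intros)

lemma reach_one: "E u v \<Longrightarrow> reach E 1 u v"
  using rS[OF _ r0] by fastforce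

lemma reach_sym: assumes "\<And>x y. E x y \<Longrightarrow> E y x" shows "reach E n u v \<Longrightarrow> reach E n v u"
proof (induction rule: reach.induct)
  case (r0 u) then show ?case by (rule reach.r0)
next
  case (rS u w n v)
  have "reach E (n+1) v u" using reach_trans[OF rS(3) reach_one[of E w u]] assms rS(1) by blast
  then show ?case by simp
qed

lemma walk_reach1: "reach E n u v \<Longrightarrow> graph V E \<Longrightarrow> u \<in> V \<Longrightarrow>
   \<exists>xs. walk V E xs \<and> hd xs = u \<and> last xs = v \<and> length xs = Suc n"
proof (induction rule: reach.induct)
  case (r0 u)
  then show ?case by (intro exI[of _ "[u]"]) (auto simp: walk_def)
next
  case (rS u w n v)
  have "w \<in> V" using rS.prems rS.hyps graph_def by metis
  then obtain xs where xs: "walk V E xs" "hd xs = w" "last xs = v" "length xs = Suc n" using rS by blast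
  have "walk V E (u # xs)"
    unfolding walk_def
  proof (intro conjI allI impI)
    show "set (u # xs) \<subseteq> V" using xs(1) rS.prems by (auto simp: walk_def)
    fix i assume "Suc i < length (u # xs)"
    then show "E ((u # xs) ! i) ((u # xs) ! Suc i)"
      using xs rS(1) by (cases i) (auto simp: walk_def hd_conv_nth)
  qed simp
  then show ?case using xs by (intro exI[of _ "u # xs"]) auto
qed

lemma walk_reach2: "walk V E xs \<Longrightarrow> length xs = Suc n \<Longrightarrow> reach E n (hd xs) (last xs)"
proof (induction n arbitrary: xs)
  case 0
  then obtain u where "xs = [u]" by (cases xs) auto
  then show ?case by (auto intro: reach.intros)
next
  case (Suc n)
  then obtain u ys where xs: "xs = u # ys" by (cases xs) auto
  with Suc.prems have ys: "ys \<noteq> []" "length ys = Suc n" by auto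
  have "walk V E ys" using Suc.prems xs ys unfolding walk_def by auto
  then have "reach E n (hd ys) (last ys)" using Suc.IH ys by blast
  moreover have "E u (hd ys)" using Suc.prems xs ys unfolding walk_def
    by (metis hd_conv_nth length_Cons nth_Cons_0 nth_Cons_Suc zero_less_Suc Suc_less_eq length_greater_0_conv)
  ultimately show ?case using xs ys by (auto intro: reach.intros)
qed

lemma walk_iff_reach: assumes "graph V E" "u \<in> V"
  shows "(\<exists>xs. walk V E xs \<and> hd xs = u \<and> last xs = v \<and> length xs = Suc n) \<longleftrightarrow> reach E n u v"
proof
  assume "\<exists>xs. walk V E xs \<and> hd xs = u \<and> last xs = v \<and> length xs = Suc n"
  then obtain xs where xs: "walk V E xs" "hd xs = u" "last xs = v" "length xs = Suc n" by blast
  show "reach E n u v" using walk_reach2[OF xs(1,4)] xs(2,3) by simp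
next
  assume "reach E n u v"
  then show "\<exists>xs. walk V E xs \<and> hd xs = u \<and> last xs = v \<and> length xs = Suc n"
    using walk_reach1[OF _ assms] by simp
qed

lemma gdist_eq: "graph V E \<Longrightarrow> u \<in> V \<Longrightarrow> gdist V E u v = (LEAST n. reach E n u v)"
  unfolding gdist_def using walk_iff_reach[of V E u v] by simp

lemma conn_ex: "connected_graph V E \<Longrightarrow> u \<in> V \<Longrightarrow> v \<in> V \<Longrightarrow> \<exists>n. reach E n u v"
proof -
  assume a: "connected_graph V E" "u \<in> V" "v \<in> V"
  then obtain xs where xs: "walk V E xs" "hd xs = u" "last xs = v" unfolding connected_graph_def by blast
  then obtain n where "length xs = Suc n" by (cases xs) (auto simp: walk_def)
  then show ?thesis using walk_reach2[OF xs(1)] xs by blast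
qed

lemma gdist_reach: "connected_graph V E \<Longrightarrow> u \<in> V \<Longrightarrow> v \<in> V \<Longrightarrow> reach E (gdist V E u v) u v"
proof -
  assume a: "connected_graph V E" "u \<in> V" "v \<in> V"
  have "gdist V E u v = (LEAST n. reach E n u v)" using a gdist_eq connected_graph_def by metis
  then show ?thesis using LeastI_ex[OF conn_ex[OF a]] by simp
qed

lemma gdist_le: "graph V E \<Longrightarrow> u \<in> V \<Longrightarrow> reach E n u v \<Longrightarrow> gdist V E u v \<le> n"
  using gdist_eq[of V E u v] Least_le[of "\<lambda>n. reach E n u v" n] by simp

lemma gdist_refl: "graph V E \<Longrightarrow> u \<in> V \<Longrightarrow> gdist V E u u = 0"
  using gdist_le[OF _ _ r0] by fastforce

lemma gdist_sym: assumes "connected_graph V E" "u \<in> V" "v \<in> V"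
  shows "gdist V E u v = gdist V E v u"
proof -
  have g: "graph V E" and s: "\<And>x y. E x y \<Longrightarrow> E y x" using assms(1) by (auto simp: connected_graph_def graph_def)
  have "gdist V E u v \<le> gdist V E v u"
    using gdist_le[OF g assms(2) reach_sym[OF s gdist_reach[OF assms(1,3,2)]]] .
  moreover have "gdist V E v u \<le> gdist V E u v"
    using gdist_le[OF g assms(3) reach_sym[OF s gdist_reach[OF assms(1,2,3)]]] .
  ultimately show ?thesis by simp
qed

lemma gdist_step: assumes "connected_graph V E" "x = w \<or> E x w" "w \<in> V" "y \<in> V"
  shows "gdist V E x y \<le> Suc (gdist V E w y)"
proof (cases "x = w")
  case True then show ?thesis by simp
next
  case False
  then have e: "E x w" using assms by auto
  have g: "graph V E" using assms(1) by (simp add: connected_graph_def)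
  then have "x \<in> V" using e graph_def by metis
  then show ?thesis using gdist_le[OF g _ rS[OF e gdist_reach[OF assms(1,3,4)]]] by blast
qed



lemma fredholm:
  fixes A :: "'a \<Rightarrow> 'b \<Rightarrow> real"
  assumes "finite W"
  shows "finite V \<Longrightarrow> (\<forall>y. (\<forall>j\<in>W. (\<Sum>i\<in>V. y i * A i j) = 0) \<longrightarrow> (\<Sum>i\<in>V. y i * b i) = 0)
     \<Longrightarrow> \<exists>x. \<forall>i\<in>V. (\<Sum>j\<in>W. A i j * x j) = b i"
using assms
proof (induction W arbitrary: V A b rule: finite_induct)
  case empty
  have "(\<Sum>i\<in>V. b i * b i) = 0" using empty.prems(2) by auto
  hence "\<forall>i\<in>V. b i * b i = 0" using sum_nonneg_eq_0_iff[OF empty.prems(1), of "\<lambda>i. b i * b i"] by simp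
  then show ?case by auto
next
  case (insert c W)
  show ?case
  proof (cases "\<forall>i\<in>V. A i c = 0")
    case True
    have "\<forall>y. (\<forall>j\<in>W. (\<Sum>i\<in>V. y i * A i j) = 0) \<longrightarrow> (\<Sum>i\<in>V. y i * b i) = 0"
      using insert.prems(2) True by auto
    then obtain x where x: "\<forall>i\<in>V. (\<Sum>j\<in>W. A i j * x j) = b i" using insert.IH insert.prems(1) by blast
    show ?thesis using x True insert.hyps by (intro exI[of _ x]) simp
  next
    case False
    then obtain p where p: "p \<in> V" "A p c \<noteq> 0" by auto
    define k where "k i = A i c / A p c" for i
    define A' where "A' i j = A i j - k i * A p j" for i j
    define b' where "b' i = b i - k i * b p" for i
    have fin: "finite V" by fact
    have key: "(\<Sum>i\<in>V. (y'(p := - (\<Sum>i\<in>V-{p}. y' i * k i))) i * f i) = (\<Sum>i\<in>V-{p}. y' i * (f i - k i * f p))"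
      for y' f
    proof -
      have "(\<Sum>i\<in>V. (y'(p := - (\<Sum>i\<in>V-{p}. y' i * k i))) i * f i)
         = - (\<Sum>i\<in>V-{p}. y' i * k i) * f p + (\<Sum>i\<in>V-{p}. (y'(p := - (\<Sum>i\<in>V-{p}. y' i * k i))) i * f i)"
        using sum.remove[OF fin p(1), of "\<lambda>i. (y'(p := - (\<Sum>i\<in>V-{p}. y' i * k i))) i * f i"] by simp
      also have "(\<Sum>i\<in>V-{p}. (y'(p := - (\<Sum>i\<in>V-{p}. y' i * k i))) i * f i) = (\<Sum>i\<in>V-{p}. y' i * f i)"
        by (rule sum.cong) auto
      also have "- (\<Sum>i\<in>V-{p}. y' i * k i) * f p + (\<Sum>i\<in>V-{p}. y' i * f i) = (\<Sum>i\<in>V-{p}. y' i * (f i - k i * f p))"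
        by (simp add: sum_distrib_left sum_distrib_right sum_subtractf right_diff_distrib algebra_simps)
      finally show ?thesis .
    qed
    have hyp': "\<forall>y'. (\<forall>j\<in>W. (\<Sum>i\<in>V-{p}. y' i * A' i j) = 0) \<longrightarrow> (\<Sum>i\<in>V-{p}. y' i * b' i) = 0"
    proof (intro allI impI)
      fix y' assume a: "\<forall>j\<in>W. (\<Sum>i\<in>V-{p}. y' i * A' i j) = 0"
      define y where "y = y'(p := - (\<Sum>i\<in>V-{p}. y' i * k i))"
      have "\<forall>j\<in>insert c W. (\<Sum>i\<in>V. y i * A i j) = 0"
      proof
        fix j assume j: "j \<in> insert c W"
        have "(\<Sum>i\<in>V. y i * A i j) = (\<Sum>i\<in>V-{p}. y' i * A' i j)"
          unfolding y_def key[of y' "\<lambda>i. A i j"] A'_def by simp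
        also have "\<dots> = 0"
        proof (cases "j = c")
          case True
          have "A' i c = 0" for i using p(2) by (simp add: A'_def k_def)
          then show ?thesis using True by simp
        next
          case False then show ?thesis using a j by auto
        qed
        finally show "(\<Sum>i\<in>V. y i * A i j) = 0" .
      qed
      then have "(\<Sum>i\<in>V. y i * b i) = 0" using insert.prems(2) by blast
      then show "(\<Sum>i\<in>V-{p}. y' i * b' i) = 0"
        unfolding y_def key[of y' b] b'_def by simp
    qed
    obtain x' where x': "\<forall>i\<in>V-{p}. (\<Sum>j\<in>W. A' i j * x' j) = b' i"
      using insert.IH[of "V-{p}" A' b'] hyp' fin by blast
    define S where "S = (\<Sum>j\<in>W. A p j * x' j)"
    define x where "x = x'(c := (b p - S) / A p c)"
    have "\<forall>i\<in>V. (\<Sum>j\<in>insert c W. A i j * x j) = b i"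
    proof
      fix i assume i: "i \<in> V"
      have sW: "(\<Sum>j\<in>W. A i j * x j) = (\<Sum>j\<in>W. A i j * x' j)"
        unfolding x_def using insert.hyps(2) by (intro sum.cong) auto
      have "(\<Sum>j\<in>insert c W. A i j * x j) = A i c * ((b p - S) / A p c) + (\<Sum>j\<in>W. A i j * x' j)"
        using insert.hyps sW by (simp add: x_def)
      also have "\<dots> = b i"
      proof (cases "i = p")
        case True then show ?thesis using p(2) by (simp add: S_def)
      next
        case False
        have "(\<Sum>j\<in>W. A i j * x' j) = (\<Sum>j\<in>W. A' i j * x' j) + k i * S"
          by (simp add: A'_def S_def sum_distrib_left algebra_simps sum.distrib[symmetric])
        also have "\<dots> = b' i + k i * S" using x' i False by auto
        finally have e: "(\<Sum>j\<in>W. A i j * x' j) = b' i + k i * S" .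
        have aic: "A i c = k i * A p c" using p(2) by (simp add: k_def)
        show ?thesis unfolding e aic b'_def using p(2) by (simp add: field_simps)
      qed
      finally show "(\<Sum>j\<in>insert c W. A i j * x j) = b i" .
    qed
    then show ?thesis by blast
  qed
qed



definition Pc :: "'a set \<Rightarrow> ('a \<Rightarrow> 'a \<Rightarrow> bool) \<Rightarrow> real \<Rightarrow> bool" where
  "Pc V E c \<longleftrightarrow> (\<exists>x. sum x V = 1 \<and> (\<forall>i\<in>V. distmul V E x i = c))"

lemma dsym: assumes "connected_graph V E"
  shows "(\<Sum>i\<in>V. x i * distmul V E w i) = (\<Sum>i\<in>V. w i * distmul V E x i)"
proof -
  have "(\<Sum>i\<in>V. x i * distmul V E w i) = (\<Sum>i\<in>V. \<Sum>j\<in>V. x i * real (gdist V E i j) * w j)"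
    by (simp add: distmul_def sum_distrib_left mult.assoc)
  also have "\<dots> = (\<Sum>j\<in>V. \<Sum>i\<in>V. x i * real (gdist V E i j) * w j)"
    by (rule sum.swap)
  also have "\<dots> = (\<Sum>j\<in>V. \<Sum>i\<in>V. w j * (real (gdist V E j i) * x i))"
    using gdist_sym[OF assms] by (intro sum.cong refl) (simp add: algebra_simps)
  also have "\<dots> = (\<Sum>i\<in>V. w i * distmul V E x i)"
    by (simp add: distmul_def sum_distrib_left)
  finally show ?thesis .
qed

lemma Pc_unique: assumes "connected_graph V E" "Pc V E c" "Pc V E c'" shows "c = c'"
proof -
  obtain x where x: "sum x V = 1" "\<forall>i\<in>V. distmul V E x i = c" using assms(2) unfolding Pc_def by blast
  obtain y where y: "sum y V = 1" "\<forall>i\<in>V. distmul V E y i = c'" using assms(3) unfolding Pc_def by blast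
  have "(\<Sum>i\<in>V. x i * distmul V E y i) = (\<Sum>i\<in>V. x i * c')" using y(2) by (intro sum.cong) auto
  also have "\<dots> = sum x V * c'" by (rule sum_distrib_right[symmetric])
  finally have 1: "(\<Sum>i\<in>V. x i * distmul V E y i) = c'" using x(1) by simp
  have "(\<Sum>i\<in>V. y i * distmul V E x i) = (\<Sum>i\<in>V. y i * c)" using x(2) by (intro sum.cong) auto
  also have "\<dots> = sum y V * c" by (rule sum_distrib_right[symmetric])
  finally have 2: "(\<Sum>i\<in>V. y i * distmul V E x i) = c" using y(1) by simp
  show ?thesis using 1 2 dsym[OF assms(1), of x y] by simp
qed

lemma exc_Pc: assumes "connected_graph V E" "distance_exceptional V E" shows "Pc V E 0"
proof -
  have fin: "finite V" using assms(1) by (simp add: connected_graph_def graph_def)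
  have "\<not> (\<exists>x. \<forall>i\<in>V. (\<Sum>j\<in>V. real (gdist V E i j) * x j) = 1)"
    using assms(2) by (simp add: distance_exceptional_def curvature_potential_def distmul_def)
  then obtain y where y: "\<forall>j\<in>V. (\<Sum>i\<in>V. y i * real (gdist V E i j)) = 0" "(\<Sum>i\<in>V. y i * 1) \<noteq> 0"
    using fredholm[OF fin fin, of "\<lambda>i j. real (gdist V E i j)" "\<lambda>_. 1"] by blast
  define s where "s = sum y V"
  have s: "s \<noteq> 0" using y(2) by (simp add: s_def)
  have dy: "distmul V E y j = 0" if j: "j \<in> V" for j
  proof -
    have "distmul V E y j = (\<Sum>i\<in>V. y i * real (gdist V E i j))"
      unfolding distmul_def using gdist_sym[OF assms(1) j] by (intro sum.cong) auto
    then show ?thesis using y(1) j by simp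
  qed
  have "sum (\<lambda>i. y i / s) V = 1" using s by (simp add: s_def sum_divide_distrib[symmetric])
  moreover have "\<forall>j\<in>V. distmul V E (\<lambda>i. y i / s) j = 0"
  proof
    fix j assume j: "j \<in> V"
    have "distmul V E (\<lambda>i. y i / s) j = distmul V E y j / s"
      by (simp add: distmul_def sum_divide_distrib)
    then show "distmul V E (\<lambda>i. y i / s) j = 0" using dy[OF j] by simp
  qed
  ultimately show ?thesis unfolding Pc_def by blast
qed

lemma cond_iff: assumes "connected_graph V E"
  shows "(distance_exceptional V E \<or> (\<exists>x. curvature_potential V E x \<and> sum x V \<noteq> 0)) \<longleftrightarrow> (\<exists>c. Pc V E c)"
proof
  assume "distance_exceptional V E \<or> (\<exists>x. curvature_potential V E x \<and> sum x V \<noteq> 0)"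
  then show "\<exists>c. Pc V E c"
  proof
    assume "distance_exceptional V E" then show ?thesis using exc_Pc[OF assms] by blast
  next
    assume "\<exists>x. curvature_potential V E x \<and> sum x V \<noteq> 0"
    then obtain w where w: "curvature_potential V E w" "sum w V \<noteq> 0" by blast
    define s where "s = sum w V"
    have "sum (\<lambda>i. w i / s) V = 1" using w(2) by (simp add: s_def sum_divide_distrib[symmetric])
    moreover have "\<forall>j\<in>V. distmul V E (\<lambda>i. w i / s) j = 1 / s"
    proof
      fix j assume j: "j \<in> V"
      have "distmul V E (\<lambda>i. w i / s) j = distmul V E w j / s"
        by (simp add: distmul_def sum_divide_distrib)
      then show "distmul V E (\<lambda>i. w i / s) j = 1 / s" using w(1) j by (simp add: curvature_potential_def)
    qed
    ultimately show ?thesis unfolding Pc_def by blast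
  qed
next
  assume "\<exists>c. Pc V E c"
  then obtain c x where x: "sum x V = 1" "\<forall>i\<in>V. distmul V E x i = c" unfolding Pc_def by blast
  show "distance_exceptional V E \<or> (\<exists>x. curvature_potential V E x \<and> sum x V \<noteq> 0)"
  proof (cases "distance_exceptional V E")
    case False
    then obtain w where w: "curvature_potential V E w" by (auto simp: distance_exceptional_def)
    have "(\<Sum>i\<in>V. x i * distmul V E w i) = 1" using w x by (simp add: curvature_potential_def)
    moreover have "(\<Sum>i\<in>V. w i * distmul V E x i) = c * sum w V" using x by (simp add: sum_distrib_left mult.commute)
    ultimately have "c * sum w V = 1" using dsym[OF assms, of x w] by simp
    then have "sum w V \<noteq> 0" by auto
    then show ?thesis using w by blast
  qed simp
qed

lemma ci_fin: assumes "connected_graph V E" "Pc V E c" shows "curv_index V E = ereal c"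
proof -
  have "(THE c. \<exists>x. sum x V = 1 \<and> (\<forall>i\<in>V. distmul V E x i = c)) = c"
  proof (rule the_equality)
    show "\<exists>x. sum x V = 1 \<and> (\<forall>i\<in>V. distmul V E x i = c)" using assms(2) unfolding Pc_def .
  next
    fix c' assume "\<exists>x. sum x V = 1 \<and> (\<forall>i\<in>V. distmul V E x i = c')"
    then have "Pc V E c'" unfolding Pc_def .
    then show "c' = c" using Pc_unique[OF assms(1) assms(2)] by simp
  qed
  then show ?thesis using cond_iff[OF assms(1)] assms(2) unfolding curv_index_def by auto
qed

lemma ci_inf: assumes "connected_graph V E" "\<not> (\<exists>c. Pc V E c)" shows "curv_index V E = \<infinity>"
  using cond_iff[OF assms(1)] assms(2) unfolding curv_index_def by auto



locale coal =
  fixes VG :: "'a set" and EG :: "'a \<Rightarrow> 'a \<Rightarrow> bool"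
    and VH :: "'b set" and EH :: "'b \<Rightarrow> 'b \<Rightarrow> bool"
    and u0 :: 'a and v0 :: 'b
  assumes cG: "connected_graph VG EG" and cH: "connected_graph VH EH"
    and u0: "u0 \<in> VG" and v0: "v0 \<in> VH"
begin

abbreviation "CV \<equiv> coal_V VG VH v0"
abbreviation "CE \<equiv> coal_E EG EH u0 v0"

definition pG :: "'a + 'b \<Rightarrow> 'a" where "pG p = (case p of Inl a \<Rightarrow> a | Inr _ \<Rightarrow> u0)"
definition pH :: "'a + 'b \<Rightarrow> 'b" where "pH p = (case p of Inl _ \<Rightarrow> v0 | Inr b \<Rightarrow> b)"
definition iH :: "'b \<Rightarrow> 'a + 'b" where "iH b = (if b = v0 then Inl u0 else Inr b)"

lemma gG: "graph VG EG" and gH: "graph VH EH" using cG cH by (auto simp: connected_graph_def)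

lemma pG_in: "p \<in> CV \<Longrightarrow> pG p \<in> VG" using u0 by (auto simp: coal_V_def pG_def)
lemma pH_in: "p \<in> CV \<Longrightarrow> pH p \<in> VH" using v0 by (auto simp: coal_V_def pH_def)

lemma gC: "graph CV CE"
  unfolding graph_def
proof (intro conjI allI impI)
  show "finite CV" using gG gH by (auto simp: graph_def coal_V_def)
  fix x y
  show "CE x y \<Longrightarrow> CE y x" using gG gH
    by (cases x; cases y) (auto simp: coal_E_def graph_def)
  show "\<not> CE x x" using gG gH by (cases x) (auto simp: coal_E_def graph_def)
  assume e: "CE x y"
  show "x \<in> CV" using e gG gH u0 by (cases x; cases y) (auto simp: coal_E_def graph_def coal_V_def)
  show "y \<in> CV" using e gG gH u0 by (cases x; cases y) (auto simp: coal_E_def graph_def coal_V_def)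
qed

lemma lift_G: "reach EG n a b \<Longrightarrow> reach CE n (Inl a) (Inl b)"
proof (induction rule: reach.induct)
  case (r0 u) then show ?case by (rule reach.r0)
next
  case (rS u w n v)
  have "CE (Inl u) (Inl w)" using rS(1) by (simp add: coal_E_def)
  then show ?case using rS(3) by (rule reach.rS)
qed

lemma lift_H: "reach EH n a b \<Longrightarrow> reach CE n (iH a) (iH b)"
proof (induction rule: reach.induct)
  case (r0 u) then show ?case by (rule reach.r0)
next
  case (rS u w n v)
  have "u \<noteq> w" using rS(1) gH by (auto simp: graph_def)
  then have "CE (iH u) (iH w)" using rS(1) by (auto simp: iH_def coal_E_def)
  then show ?case using rS(3) by (rule reach.rS)
qed

abbreviation "dG \<equiv> gdist VG EG"
abbreviation "dH \<equiv> gdist VH EH"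

lemma upper: assumes "p \<in> CV" "q \<in> CV"
  shows "reach CE (dG (pG p) (pG q) + dH (pH p) (pH q)) p q"
proof (cases p)
  case (Inl a)
  then have a: "a \<in> VG" using assms(1) by (auto simp: coal_V_def)
  show ?thesis
  proof (cases q)
    case (Inl b)
    then have b: "b \<in> VG" using assms(2) by (auto simp: coal_V_def)
    show ?thesis using lift_G[OF gdist_reach[OF cG a b]] Inl \<open>p = Inl a\<close> gdist_refl[OF gH v0]
      by (simp add: pG_def pH_def)
  next
    case (Inr b)
    then have b: "b \<in> VH" "b \<noteq> v0" using assms(2) by (auto simp: coal_V_def)
    have 1: "reach CE (dG a u0) (Inl a) (Inl u0)" using lift_G[OF gdist_reach[OF cG a u0]] .
    have 2: "reach CE (dH v0 b) (Inl u0) (Inr b)" using lift_H[OF gdist_reach[OF cH v0 b(1)]] b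
      by (simp add: iH_def)
    show ?thesis using reach_trans[OF 1 2] Inr \<open>p = Inl a\<close> by (simp add: pG_def pH_def)
  qed
next
  case (Inr a)
  then have a: "a \<in> VH" "a \<noteq> v0" using assms(1) by (auto simp: coal_V_def)
  show ?thesis
  proof (cases q)
    case (Inl b)
    then have b: "b \<in> VG" using assms(2) by (auto simp: coal_V_def)
    have 1: "reach CE (dH a v0) (Inr a) (Inl u0)" using lift_H[OF gdist_reach[OF cH a(1) v0]] a
      by (simp add: iH_def)
    have 2: "reach CE (dG u0 b) (Inl u0) (Inl b)" using lift_G[OF gdist_reach[OF cG u0 b]] .
    show ?thesis using reach_trans[OF 1 2] Inl \<open>p = Inr a\<close> by (simp add: pG_def pH_def add.commute)
  next
    case (Inr b)
    then have b: "b \<in> VH" "b \<noteq> v0" using assms(2) by (auto simp: coal_V_def)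
    show ?thesis using lift_H[OF gdist_reach[OF cH a(1) b(1)]] a b Inr \<open>p = Inr a\<close> gdist_refl[OF gG u0]
      by (simp add: pG_def pH_def iH_def)
  qed
qed

lemma edge_cases: "CE p w \<Longrightarrow>
   ((pG p = pG w \<or> EG (pG p) (pG w)) \<and> pH p = pH w) \<or> (pG p = pG w \<and> (pH p = pH w \<or> EH (pH p) (pH w)))"
  by (cases p; cases w) (auto simp: coal_E_def pG_def pH_def)

lemma lower: "reach CE n p q \<Longrightarrow> p \<in> CV \<Longrightarrow> q \<in> CV \<Longrightarrow> dG (pG p) (pG q) + dH (pH p) (pH q) \<le> n"
proof (induction rule: reach.induct)
  case (r0 u) then show ?case using gdist_refl[OF gG pG_in] gdist_refl[OF gH pH_in] by simp
next
  case (rS u w n v)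
  have w: "w \<in> CV" using rS(1) gC by (auto simp: graph_def)
  have IH: "dG (pG w) (pG v) + dH (pH w) (pH v) \<le> n" using rS.IH w rS.prems by blast
  from edge_cases[OF rS(1)] show ?case
  proof
    assume "(pG u = pG w \<or> EG (pG u) (pG w)) \<and> pH u = pH w"
    then show ?thesis using gdist_step[OF cG _ pG_in[OF w] pG_in[OF rS.prems(2)], of "pG u"] IH by auto
  next
    assume "pG u = pG w \<and> (pH u = pH w \<or> EH (pH u) (pH w))"
    then show ?thesis using gdist_step[OF cH _ pH_in[OF w] pH_in[OF rS.prems(2)], of "pH u"] IH by auto
  qed
qed

lemma distC: assumes "p \<in> CV" "q \<in> CV"
  shows "gdist CV CE p q = dG (pG p) (pG q) + dH (pH p) (pH q)"
proof -
  have "gdist CV CE p q \<le> dG (pG p) (pG q) + dH (pH p) (pH q)"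
    using gdist_le[OF gC assms(1) upper[OF assms]] .
  moreover have "reach CE (gdist CV CE p q) p q"
    using gdist_eq[OF gC assms(1)] LeastI_ex[of "\<lambda>n. reach CE n p q"] upper[OF assms] by auto
  then have "dG (pG p) (pG q) + dH (pH p) (pH q) \<le> gdist CV CE p q" using lower assms by blast
  ultimately show ?thesis by simp
qed

lemma cC: "connected_graph CV CE"
  unfolding connected_graph_def
proof (intro conjI ballI)
  show "graph CV CE" by (rule gC)
  show "CV \<noteq> {}" using u0 by (auto simp: coal_V_def)
  fix p q assume "p \<in> CV" "q \<in> CV"
  then show "\<exists>xs. walk CV CE xs \<and> hd xs = p \<and> last xs = q"
    using walk_reach1[OF upper gC] by blast
qed

end


context coal begin

definition xz :: "('a + 'b \<Rightarrow> real) \<Rightarrow> 'a \<Rightarrow> real" where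
  "xz z a = z (Inl a) + (if a = u0 then (\<Sum>b\<in>VH-{v0}. z (Inr b)) else 0)"
definition yz :: "('a + 'b \<Rightarrow> real) \<Rightarrow> 'b \<Rightarrow> real" where
  "yz z b = (if b = v0 then (\<Sum>a\<in>VG. z (Inl a)) else z (Inr b))"

lemma finG: "finite VG" and finH: "finite VH" using gG gH by (auto simp: graph_def)

lemma sum_CV: "(\<Sum>p\<in>CV. f p) = (\<Sum>a\<in>VG. f (Inl a)) + (\<Sum>b\<in>VH-{v0}. f (Inr b))"
proof -
  have "(\<Sum>p\<in>CV. f p) = (\<Sum>p\<in>Inl ` VG. f p) + (\<Sum>p\<in>Inr ` (VH-{v0}). f p)"
    unfolding coal_V_def using finG finH by (intro sum.union_disjoint) auto
  also have "\<dots> = (\<Sum>a\<in>VG. f (Inl a)) + (\<Sum>b\<in>VH-{v0}. f (Inr b))"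
    by (simp add: sum.reindex)
  finally show ?thesis .
qed

lemma pushG: "(\<Sum>q\<in>CV. f (pG q) * z q) = (\<Sum>a\<in>VG. f a * xz z a)"
proof -
  have "(\<Sum>a\<in>VG. f a * xz z a) = (\<Sum>a\<in>VG. f a * z (Inl a)) + (\<Sum>a\<in>VG. (if a = u0 then f a * (\<Sum>b\<in>VH-{v0}. z (Inr b)) else 0))"
  proof -
    have "(\<Sum>a\<in>VG. f a * xz z a) = (\<Sum>a\<in>VG. f a * z (Inl a) + (if a = u0 then f a * (\<Sum>b\<in>VH-{v0}. z (Inr b)) else 0))"
      by (intro sum.cong) (auto simp: xz_def distrib_left)
    then show ?thesis by (simp only: sum.distrib)
  qed
  also have "(\<Sum>a\<in>VG. (if a = u0 then f a * (\<Sum>b\<in>VH-{v0}. z (Inr b)) else 0)) = f u0 * (\<Sum>b\<in>VH-{v0}. z (Inr b))"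
    using finG u0 by (simp add: sum.delta')
  finally show ?thesis by (simp add: sum_CV pG_def sum_distrib_left)
qed

lemma pushH: "(\<Sum>q\<in>CV. g (pH q) * z q) = (\<Sum>b\<in>VH. g b * yz z b)"
proof -
  have "(\<Sum>b\<in>VH. g b * yz z b) = g v0 * yz z v0 + (\<Sum>b\<in>VH-{v0}. g b * yz z b)"
    using sum.remove[OF finH v0] .
  also have "(\<Sum>b\<in>VH-{v0}. g b * yz z b) = (\<Sum>b\<in>VH-{v0}. g b * z (Inr b))"
    by (intro sum.cong) (auto simp: yz_def)
  finally show ?thesis by (simp add: sum_CV pH_def yz_def sum_distrib_left)
qed

lemma distmul_C: assumes "p \<in> CV"
  shows "distmul CV CE z p = distmul VG EG (xz z) (pG p) + distmul VH EH (yz z) (pH p)"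
proof -
  have "distmul CV CE z p = (\<Sum>q\<in>CV. real (dG (pG p) (pG q)) * z q + real (dH (pH p) (pH q)) * z q)"
    unfolding distmul_def using distC[OF assms] by (intro sum.cong) (auto simp: distrib_right)
  also have "\<dots> = (\<Sum>q\<in>CV. real (dG (pG p) (pG q)) * z q) + (\<Sum>q\<in>CV. real (dH (pH p) (pH q)) * z q)"
    by (rule sum.distrib)
  also have "\<dots> = distmul VG EG (xz z) (pG p) + distmul VH EH (yz z) (pH p)"
    unfolding distmul_def pushG[of "\<lambda>a. real (dG (pG p) a)"] pushH[of "\<lambda>b. real (dH (pH p) b)"] ..
  finally show ?thesis .
qed

lemma sum_xz: "sum z CV = sum (xz z) VG" using pushG[of "\<lambda>_. 1" z] by simp
lemma sum_yz: "sum z CV = sum (yz z) VH" using pushH[of "\<lambda>_. 1" z] by simp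

lemma forward: assumes "Pc VG EG \<alpha>" "Pc VH EH \<beta>" shows "Pc CV CE (\<alpha> + \<beta>)"
proof -
  obtain x where x: "sum x VG = 1" "\<forall>i\<in>VG. distmul VG EG x i = \<alpha>" using assms(1) unfolding Pc_def by blast
  obtain y where y: "sum y VH = 1" "\<forall>i\<in>VH. distmul VH EH y i = \<beta>" using assms(2) unfolding Pc_def by blast
  define z where "z = case_sum (\<lambda>a. x a + (if a = u0 then y v0 - 1 else 0)) y"
  have sy: "y v0 + (\<Sum>b\<in>VH-{v0}. y b) = 1" using sum.remove[OF finH v0, of y] y(1) by simp
  have hx: "xz z = x"
  proof
    fix a show "xz z a = x a" using sy by (auto simp: xz_def z_def)
  qed
  have "(\<Sum>a\<in>VG. z (Inl a)) = (\<Sum>a\<in>VG. x a) + (\<Sum>a\<in>VG. (if a = u0 then y v0 - 1 else 0))"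
    by (simp add: z_def sum.distrib)
  also have "\<dots> = y v0" using x(1) finG u0 by (simp add: sum.delta')
  finally have sz: "(\<Sum>a\<in>VG. z (Inl a)) = y v0" .
  have hy: "yz z = y"
  proof
    fix b show "yz z b = y b" using sz by (auto simp: yz_def z_def)
  qed
  have "sum z CV = 1" using sum_xz[of z] hx x(1) by simp
  moreover have "\<forall>p\<in>CV. distmul CV CE z p = \<alpha> + \<beta>"
    using distmul_C hx hy x(2) y(2) pG_in pH_in by simp
  ultimately show ?thesis unfolding Pc_def by blast
qed

lemma backward: assumes "Pc CV CE \<gamma>" shows "(\<exists>c. Pc VG EG c) \<and> (\<exists>c. Pc VH EH c)"
proof -
  obtain z where z: "sum z CV = 1" "\<forall>p\<in>CV. distmul CV CE z p = \<gamma>" using assms unfolding Pc_def by blast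
  have "\<forall>a\<in>VG. distmul VG EG (xz z) a = \<gamma> - distmul VH EH (yz z) v0"
  proof
    fix a assume a: "a \<in> VG"
    then have "Inl a \<in> CV" by (simp add: coal_V_def)
    then show "distmul VG EG (xz z) a = \<gamma> - distmul VH EH (yz z) v0"
      using distmul_C[of "Inl a" z] z(2) by (simp add: pG_def pH_def)
  qed
  then have 1: "Pc VG EG (\<gamma> - distmul VH EH (yz z) v0)" unfolding Pc_def using z(1) sum_xz by metis
  have "\<forall>b\<in>VH. distmul VH EH (yz z) b = \<gamma> - distmul VG EG (xz z) u0"
  proof
    fix b assume b: "b \<in> VH"
    show "distmul VH EH (yz z) b = \<gamma> - distmul VG EG (xz z) u0"
    proof (cases "b = v0")
      case True
      have "Inl u0 \<in> CV" using u0 by (simp add: coal_V_def)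
      then show ?thesis using distmul_C[of "Inl u0" z] z(2) True by (simp add: pG_def pH_def)
    next
      case False
      then have "Inr b \<in> CV" using b by (simp add: coal_V_def)
      then show ?thesis using distmul_C[of "Inr b" z] z(2) by (simp add: pG_def pH_def)
    qed
  qed
  then have 2: "Pc VH EH (\<gamma> - distmul VG EG (xz z) u0)" unfolding Pc_def using z(1) sum_yz by metis
  show ?thesis using 1 2 by blast
qed

end

theorem theorem3p5:
  fixes VG :: "'a set" and EG :: "'a \<Rightarrow> 'a \<Rightarrow> bool"
    and VH :: "'b set" and EH :: "'b \<Rightarrow> 'b \<Rightarrow> bool"
    and u0 :: 'a and v0 :: 'b
  assumes "connected_graph VG EG" and "connected_graph VH EH"
    and "u0 \<in> VG" and "v0 \<in> VH"
  shows "(curv_index VG EG < \<infinity> \<and> curv_index VH EH < \<infinity> \<longrightarrow>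
            curv_index (coal_V VG VH v0) (coal_E EG EH u0 v0)
              = curv_index VG EG + curv_index VH EH)
       \<and> (curv_index VG EG = \<infinity> \<or> curv_index VH EH = \<infinity> \<longrightarrow>
            curv_index (coal_V VG VH v0) (coal_E EG EH u0 v0) = \<infinity>)"
proof -
  interpret coal VG EG VH EH u0 v0 using assms by unfold_locales
  have iG: "curv_index VG EG = \<infinity>" if "\<not> (\<exists>c. Pc VG EG c)" using ci_inf[OF cG that] .
  have iH: "curv_index VH EH = \<infinity>" if "\<not> (\<exists>c. Pc VH EH c)" using ci_inf[OF cH that] .
  show ?thesis
  proof (intro conjI impI)
    assume a: "curv_index VG EG < \<infinity> \<and> curv_index VH EH < \<infinity>"
    then obtain \<alpha> \<beta> where al: "Pc VG EG \<alpha>" and be: "Pc VH EH \<beta>" using iG iH by force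
    show "curv_index CV CE = curv_index VG EG + curv_index VH EH"
      using ci_fin[OF cC forward[OF al be]] ci_fin[OF cG al] ci_fin[OF cH be] by simp
  next
    assume a: "curv_index VG EG = \<infinity> \<or> curv_index VH EH = \<infinity>"
    have "\<not> (\<exists>c. Pc VG EG c) \<or> \<not> (\<exists>c. Pc VH EH c)"
      using a ci_fin[OF cG] ci_fin[OF cH] by force
    then have "\<not> (\<exists>c. Pc CV CE c)" using backward by blast
    then show "curv_index CV CE = \<infinity>" using ci_inf[OF cC] by blast
  qed
qed

end
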